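(* Let $C$ and $D$ be nonempty subsets of a Hilbert space $H$ with $D$ closed and convex, and let $P:H\to D$ be the metric projection onto $D$. Let $S$ be a right reversible semitopological semigroup and $\mathcal{S}=\{T_s:s\in S\}$ a representation of $S$ on $C$. Suppose that $x\in C$ is such that the map $s\mapsto T_sx$ is continuous from $S$ into $C$ (norm topology) and $\|T_{ts}x-z\|\le\|T_sx-z\|$ for all $z\in D$ and $s,t\in S$. Then the net $(P(T_sx))_{s\in S}$ converges in norm to some $z_0\in D$, where $S$ is ordered by: $a\le b$ iff $\overline{Sa}\cup\{a\}\supseteq\overline{Sb}\cup\{b\}$, and the limit is taken as $s$ increases in this order.
   Context: A semitopological semigroup is a semigroup with a Hausdorff topology in which $s\mapsto ts$ and $s\mapsto st$ are continuous for each $t$; it is right reversible if $\overline{Sa}\cap\overline{Sb}\neq\emptyset$ for all $a,b\in S$. A representation is a family $T_s:C\to C$ with $T_{st}=T_s\circ T_t$. The metric projection $P(y)$ is the unique point of $D$ nearest to $y$. *)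

theory Defs
  imports "HOL-Analysis.Analysis"
begin

text \<open>Metric projection onto D: the (unique, for D closed convex nonempty in a Hilbert space)
 point of D nearest to y.\<close>
definition metric_proj :: "'h::real_normed_vector set \<Rightarrow> 'h \<Rightarrow> 'h" where
  "metric_proj D y = (THE z. z \<in> D \<and> (\<forall>w\<in>D. norm (y - z) \<le> norm (y - w)))"

definition semitop_semigroup :: "('s::{semigroup_mult,t2_space}) itself \<Rightarrow> bool" where
  "semitop_semigroup _ \<longleftrightarrow>
     (\<forall>t::'s. continuous_on UNIV (\<lambda>s. t * s) \<and> continuous_on UNIV (\<lambda>s. s * t))"

definition right_reversible :: "('s::{semigroup_mult,topological_space}) itself \<Rightarrow> bool" where
  "right_reversible _ \<longleftrightarrow>
     (\<forall>a b::'s. closure (range (\<lambda>s. s * a)) \<inter> closure (range (\<lambda>s. s * b)) \<noteq> {})"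

definition sg_le :: "'s::{semigroup_mult,topological_space} \<Rightarrow> 's \<Rightarrow> bool" where
  "sg_le a b \<longleftrightarrow>
     closure (range (\<lambda>s. s * b)) \<union> {b} \<subseteq> closure (range (\<lambda>s. s * a)) \<union> {a}"

definition representation_on :: "('s::semigroup_mult \<Rightarrow> 'h \<Rightarrow> 'h) \<Rightarrow> 'h set \<Rightarrow> bool" where
  "representation_on T C \<longleftrightarrow>
     (\<forall>s. T s ` C \<subseteq> C) \<and> (\<forall>s t. \<forall>y\<in>C. T (s * t) y = T s (T t y))"

end

theory Submission
  imports Defs
begin

lemma parallelogram:
  fixes a b :: "'h::real_inner"
  shows "norm (a + b)^2 + norm (a - b)^2 = 2 * norm a ^2 + 2 * norm b ^2"
  by (simp add: power2_norm_eq_inner inner_add_left inner_add_right inner_diff_left inner_diff_right inner_commute)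

lemma mid_ineq:
  fixes y u v :: "'h::real_inner"
  shows "norm (u - v)^2 = 2 * norm (y - u)^2 + 2 * norm (y - v)^2 - 4 * norm (y - (1/2) *\<^sub>R (u + v))^2"
proof -
  have e: "(y - u) + (y - v) = 2 *\<^sub>R (y - (1/2) *\<^sub>R (u + v))"
    by (simp add: algebra_simps scaleR_2)
  have e2: "(y - u) - (y - v) = v - u" by simp
  have "norm (2 *\<^sub>R (y - (1/2) *\<^sub>R (u + v)))^2 = 4 * norm (y - (1/2) *\<^sub>R (u + v))^2"
    by (simp add: power2_eq_square)
  moreover have "norm (v - u) = norm (u - v)" by (rule norm_minus_commute)
  ultimately show ?thesis using parallelogram[of "y - u" "y - v"] e e2 by simp
qed

lemma proj_exists:
  fixes D :: "'h::{real_inner,complete_space} set"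
  assumes "closed D" "convex D" "D \<noteq> {}"
  shows "\<exists>p\<in>D. \<forall>w\<in>D. norm (y - p) \<le> norm (y - w)"
proof -
  define d where "d = infdist y D"
  have dle: "d \<le> norm (y - w)" if "w \<in> D" for w
    using infdist_le[OF that, of y] by (simp add: d_def dist_norm)
  have d0: "d \<ge> 0" by (simp add: d_def infdist_nonneg)
  have "\<exists>w\<in>D. norm (y - w)^2 < d^2 + 1 / real (Suc n)" for n
  proof -
    have hp: "min 1 (1 / real (Suc n) / (2*d+1)) > 0" using d0 by simp
    have "Inf ((\<lambda>a. dist y a) ` D) < d + min 1 (1 / real (Suc n) / (2*d+1))"
      using hp infdist_notempty[OF assms(3), of y] unfolding d_def by simp
    from cInf_lessD[OF _ this] assms(3)
    have "\<exists>w\<in>D. norm (y - w) < d + min 1 (1 / real (Suc n) / (2*d+1))"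
      by (auto simp: dist_norm)
    then obtain w where w: "w \<in> D" "norm (y - w) < d + min 1 (1 / real (Suc n) / (2*d+1))" by blast
    define h where "h = min 1 (1 / real (Suc n) / (2*d+1))"
    have h0: "h > 0" "h \<le> 1" "h \<le> 1 / real (Suc n) / (2*d+1)" using d0 by (auto simp: h_def)
    have "norm (y - w)^2 < (d + h)^2"
      using w dle[OF w(1)] d0 h0 unfolding h_def[symmetric]
      by (simp add: power_strict_mono)
    also have "(d + h)^2 = d^2 + h * (2*d + h)" by (simp add: power2_eq_square algebra_simps)
    also have "h * (2*d + h) \<le> h * (2*d+1)" using h0 d0 by (intro mult_left_mono) auto
    also have "h * (2*d+1) \<le> 1 / real (Suc n)" using h0(3) d0 by (simp add: pos_le_divide_eq mult_ac)
    finally show ?thesis using w(1) by auto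
  qed
  then obtain w where w: "\<And>n. w n \<in> D" "\<And>n. norm (y - w n)^2 < d^2 + 1 / real (Suc n)"
    by metis
  have wd: "norm (w m - w n)^2 \<le> 2 / real (Suc m) + 2 / real (Suc n)" for m n
  proof -
    have mD: "(1/2) *\<^sub>R (w m + w n) \<in> D"
      using convexD[OF assms(2) w(1)[of m] w(1)[of n], of "1/2" "1/2"] by (simp add: scaleR_add_right)
    have "d^2 \<le> norm (y - (1/2) *\<^sub>R (w m + w n))^2" using dle[OF mD] d0 by (simp add: power_mono)
    then show ?thesis using mid_ineq[of "w m" "w n" y] w(2)[of m] w(2)[of n] by linarith
  qed
  have "Cauchy w"
  proof (rule metric_CauchyI)
    fix e :: real assume e: "e > 0"
    obtain M where M: "4 / e^2 < real M" using reals_Archimedean2 by blast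
    have "M > 0" using M e by (metis gr0I divide_pos_pos less_le_not_le of_nat_0 zero_less_numeral zero_less_power)
    show "\<exists>M. \<forall>m\<ge>M. \<forall>n\<ge>M. dist (w m) (w n) < e"
    proof (intro exI allI impI)
      fix m n assume mn: "M \<le> m" "M \<le> n"
      have "2 / real (Suc m) \<le> 2 / real M" "2 / real (Suc n) \<le> 2 / real M"
        using mn \<open>M > 0\<close> by (auto simp: divide_simps)
      moreover have "4 / real M < e^2" using M e \<open>M>0\<close> by (simp add: field_simps)
      ultimately have "norm (w m - w n)^2 < e^2" using wd[of m n] by linarith
      then show "dist (w m) (w n) < e" using e by (simp add: dist_norm power_less_imp_less_base)
    qed
  qed
  then obtain p where p: "w \<longlonglongrightarrow> p" using Cauchy_convergent_iff convergent_def by blast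
  have pD: "p \<in> D" using closed_sequentially[OF assms(1)] w(1) p by blast
  have lim1: "(\<lambda>n. norm (y - w n)^2) \<longlonglongrightarrow> norm (y - p)^2"
    by (intro tendsto_intros p)
  have lim2: "(\<lambda>n. d^2 + 1 / real (Suc n)) \<longlonglongrightarrow> d^2"
    using tendsto_add[OF tendsto_const LIMSEQ_inverse_real_of_nat, of "d^2"]
    by (simp add: inverse_eq_divide)
  have ev: "eventually (\<lambda>n. norm (y - w n)^2 \<le> d^2 + 1 / real (Suc n)) sequentially"
    using w(2) by (simp add: less_imp_le)
  have "norm (y - p)^2 \<le> d^2"
    by (rule tendsto_le[OF _ lim2 lim1 ev]) simp
  then have "norm (y - p) \<le> d" using d0 by (rule power2_le_imp_le)
  then show ?thesis using pD dle by (meson order_trans)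
qed

lemma proj_unique:
  fixes D :: "'h::{real_inner,complete_space} set"
  assumes "closed D" "convex D" "D \<noteq> {}"
  shows "\<exists>!p. p \<in> D \<and> (\<forall>w\<in>D. norm (y - p) \<le> norm (y - w))"
proof -
  obtain p where p: "p \<in> D" "\<forall>w\<in>D. norm (y - p) \<le> norm (y - w)"
    using proj_exists[OF assms] by blast
  have "q = p" if q: "q \<in> D" "\<forall>w\<in>D. norm (y - q) \<le> norm (y - w)" for q
  proof -
    have mD: "(1/2) *\<^sub>R (q + p) \<in> D"
      using convexD[OF assms(2) q(1) p(1), of "1/2" "1/2"] by (simp add: scaleR_add_right)
    have eq: "norm (y - q) = norm (y - p)" using p q by (meson antisym)
    have "norm (y - p) \<le> norm (y - (1/2) *\<^sub>R (q + p))" using p(2) mD by blast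
    then have "norm (y - p)^2 \<le> norm (y - (1/2) *\<^sub>R (q + p))^2" by (simp add: power_mono)
    moreover have "norm (y - q)^2 = norm (y - p)^2" using eq by simp
    ultimately have "norm (q - p)^2 \<le> 0" using mid_ineq[of q p y] by linarith
    then show ?thesis by simp
  qed
  then show ?thesis using p by blast
qed

lemma norm_exp:
  fixes a b :: "'h::real_inner"
  shows "norm (a - t *\<^sub>R b)^2 = norm a^2 - 2 * t * inner a b + t^2 * norm b^2"
  by (simp only: power2_norm_eq_inner) (simp add: inner_diff_left inner_diff_right inner_commute power2_eq_square algebra_simps)

lemma proj_props:
  fixes D :: "'h::{real_inner,complete_space} set"
  assumes "closed D" "convex D" "D \<noteq> {}"
  shows "metric_proj D y \<in> D"
    and "\<And>w. w \<in> D \<Longrightarrow> norm (y - metric_proj D y)^2 + norm (metric_proj D y - w)^2 \<le> norm (y - w)^2"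
proof -
  define p where "p = metric_proj D y"
  have P: "p \<in> D \<and> (\<forall>w\<in>D. norm (y - p) \<le> norm (y - w))"
    unfolding p_def metric_proj_def by (rule theI'[OF proj_unique[OF assms]])
  then show "metric_proj D y \<in> D" by (simp add: p_def)
  fix w assume w: "w \<in> D"
  have inn: "inner (y - p) (w - p) \<le> t * norm (w - p)^2 / 2" if t: "0 < t" "t \<le> 1" for t
  proof -
    have "(1 - t) *\<^sub>R p + t *\<^sub>R w \<in> D" using convexD[OF assms(2) conjunct1[OF P] w] t by simp
    then have "norm (y - p) \<le> norm (y - ((1 - t) *\<^sub>R p + t *\<^sub>R w))" using P by blast
    then have le: "norm (y - p)^2 \<le> norm ((y - p) - t *\<^sub>R (w - p))^2"
      by (simp add: power_mono algebra_simps)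
    have "norm ((y - p) - t *\<^sub>R (w - p))^2 = norm (y - p)^2 - 2 * t * inner (y - p) (w - p) + t^2 * norm (w - p)^2"
      by (rule norm_exp)
    then have "2 * t * inner (y - p) (w - p) \<le> t * (t * norm (w - p)^2)" using le by (simp add: power2_eq_square algebra_simps)
    then have "2 * inner (y - p) (w - p) \<le> t * norm (w - p)^2" using t by simp
    then show ?thesis by simp
  qed
  have "inner (y - p) (w - p) \<le> 0"
  proof (rule ccontr)
    assume "\<not> ?thesis"
    then have a: "inner (y - p) (w - p) > 0" by simp
    define c where "c = norm (w - p)^2"
    define t where "t = min 1 (inner (y - p) (w - p) / (c + 1))"
    have c0: "c \<ge> 0" by (simp add: c_def)
    have t: "0 < t" "t \<le> 1" using a c0 by (auto simp: t_def)
    have "t * c / 2 \<le> inner (y - p) (w - p) / (c + 1) * c / 2"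
      using c0 by (intro divide_right_mono mult_right_mono) (auto simp: t_def)
    also have "\<dots> < inner (y - p) (w - p)"
    proof -
      have "inner (y - p) (w - p) * c < inner (y - p) (w - p) * (2 * (c + 1))"
        using a c0 by (intro mult_strict_left_mono) auto
      then show ?thesis using c0 by (simp add: field_simps)
    qed
    finally show False using inn[OF t] by (simp add: c_def)
  qed
  moreover have "norm (y - w)^2 = norm (y - p)^2 - 2 * inner (y - p) (w - p) + norm (p - w)^2"
  proof -
    have "y - w = (y - p) - (w - p)" by simp
    then have "norm (y - w)^2 = norm ((y - p) - (w - p))^2" by simp
    also have "\<dots> = norm (y - p)^2 - 2 * inner (y - p) (w - p) + norm (w - p)^2"
      by (simp add: power2_norm_eq_inner inner_diff_left inner_diff_right inner_commute)
    finally show ?thesis by (simp add: norm_minus_commute)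
  qed
  ultimately show "norm (y - metric_proj D y)^2 + norm (metric_proj D y - w)^2 \<le> norm (y - w)^2"
    by (simp add: p_def)
qed

theorem lemma4p10:
  fixes C D :: "'h::{real_inner,complete_space} set"
    and T :: "'s::{semigroup_mult,t2_space} \<Rightarrow> 'h \<Rightarrow> 'h"
    and x :: 'h
  assumes "C \<noteq> {}" and "D \<noteq> {}" and "closed D" and "convex D"
    and "semitop_semigroup TYPE('s)" and "right_reversible TYPE('s)"
    and "representation_on T C"
    and "x \<in> C"
    and "continuous_on UNIV (\<lambda>s. T s x)"
    and "\<And>z s t. z \<in> D \<Longrightarrow> norm (T (t * s) x - z) \<le> norm (T s x - z)"
  shows "\<exists>z0\<in>D. \<forall>e>0. \<exists>s0. \<forall>s. sg_le s0 s \<longrightarrow> norm (metric_proj D (T s x) - z0) < e"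
proof -
  define y where "y s = T s x" for s
  define p where "p s = metric_proj D (y s)" for s
  define q where "q s = norm (y s - p s)^2" for s
  have pD: "p s \<in> D" for s
    unfolding p_def by (rule proj_props(1)[OF assms(3,4,2)])
  have key: "q s + norm (p s - w)^2 \<le> norm (y s - w)^2" if "w \<in> D" for s w
    unfolding p_def q_def by (rule proj_props(2)[OF assms(3,4,2) that])
  define q0 where "q0 = Inf (range q)"
  have bdd: "bdd_below (range q)"
    by (rule bdd_belowI[of _ 0]) (auto simp: q_def)
  have q0le: "q0 \<le> q s" for s
    unfolding q0_def by (rule cInf_lower[OF _ bdd]) simp
  have ycont: "continuous_on UNIV y"
    using assms(9) by (simp add: y_def[abs_def])
  have close: "norm (p s - p a)^2 \<le> q a - q0"
    if s: "s \<in> closure (range (\<lambda>t. t * a)) \<union> {a}" for s a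
  proof -
    define K where "K = {s. norm (y s - p a) \<le> norm (y a - p a)}"
    have K: "closed K" unfolding K_def
      by (intro closed_Collect_le continuous_on_norm continuous_on_diff ycont continuous_on_const)
    have "range (\<lambda>t. t * a) \<subseteq> K"
      using assms(10)[OF pD[of a]] by (auto simp: K_def y_def)
    then have "closure (range (\<lambda>t. t * a)) \<subseteq> K" using K by (rule closure_minimal)
    moreover have "a \<in> K" by (simp add: K_def)
    ultimately have "s \<in> K" using s by blast
    then have "norm (y s - p a) \<le> norm (y a - p a)" by (simp add: K_def)
    then have "norm (y s - p a)^2 \<le> q a" unfolding q_def by (simp add: power_mono)
    then show ?thesis using key[OF pD[of a], of s] q0le[of s] by linarith
  qed
  have "\<exists>s. q s < q0 + (1 / real (Suc n))^2" for n
  proof -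
    have "Inf (range q) < q0 + (1 / real (Suc n))^2" unfolding q0_def by simp
    from cInf_lessD[OF _ this] show ?thesis by auto
  qed
  then obtain sn where sn: "\<And>n. q (sn n) < q0 + (1 / real (Suc n))^2" by metis
  have near: "norm (p s - p (sn n)) < 1 / real (Suc n)"
    if "s \<in> closure (range (\<lambda>t. t * sn n)) \<union> {sn n}" for s n
  proof -
    have "norm (p s - p (sn n))^2 < (1 / real (Suc n))^2"
      using close[OF that] sn[of n] by linarith
    then show ?thesis by (rule power_less_imp_less_base) simp
  qed
  have cross: "norm (p (sn m) - p (sn n)) < 1 / real (Suc m) + 1 / real (Suc n)" for m n
  proof -
    obtain c where c: "c \<in> closure (range (\<lambda>s. s * sn m))" "c \<in> closure (range (\<lambda>s. s * sn n))"
      using assms(6) unfolding right_reversible_def by blast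
    have "p (sn m) - p (sn n) = (p c - p (sn n)) - (p c - p (sn m))" by simp
    then have "norm (p (sn m) - p (sn n)) \<le> norm (p c - p (sn n)) + norm (p c - p (sn m))"
      by (metis norm_triangle_ineq4)
    moreover have "norm (p c - p (sn m)) < 1 / real (Suc m)" using c(1) by (intro near) auto
    moreover have "norm (p c - p (sn n)) < 1 / real (Suc n)" using c(2) by (intro near) auto
    ultimately show ?thesis by linarith
  qed
  have mono: "1 / real (Suc m) \<le> 1 / real (Suc n)" if "n \<le> m" for m n
    using that by (simp add: divide_simps)
  have "Cauchy (\<lambda>n. p (sn n))"
  proof (rule metric_CauchyI)
    fix e :: real assume e: "e > 0"
    obtain M where M: "2 / e < real M" using reals_Archimedean2 by blast
    have M2: "2 / real (Suc M) < e"
    proof -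
      have "2 / e < real (Suc M)" using M by simp
      then show ?thesis using e by (simp add: field_simps)
    qed
    show "\<exists>M. \<forall>m\<ge>M. \<forall>n\<ge>M. dist (p (sn m)) (p (sn n)) < e"
    proof (intro exI allI impI)
      fix m n assume mn: "M \<le> m" "M \<le> n"
      have "dist (p (sn m)) (p (sn n)) < 1 / real (Suc m) + 1 / real (Suc n)"
        using cross[of m n] by (simp add: dist_norm)
      also have "\<dots> \<le> 2 / real (Suc M)" using mono[OF mn(1)] mono[OF mn(2)] by simp
      finally show "dist (p (sn m)) (p (sn n)) < e" using M2 by linarith
    qed
  qed
  then obtain z0 where lim: "(\<lambda>n. p (sn n)) \<longlonglongrightarrow> z0"
    using Cauchy_convergent_iff convergent_def by blast
  have z0D: "z0 \<in> D" by (rule closed_sequentially[OF assms(3) _ lim]) (simp add: pD)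
  have bound: "norm (p (sn n) - z0) \<le> 2 / real (Suc n)" for n
  proof (rule LIMSEQ_le_const2)
    show "(\<lambda>m. norm (p (sn n) - p (sn m))) \<longlonglongrightarrow> norm (p (sn n) - z0)"
      by (intro tendsto_intros lim)
    show "\<exists>N. \<forall>m\<ge>N. norm (p (sn n) - p (sn m)) \<le> 2 / real (Suc n)"
    proof (intro exI allI impI)
      fix m assume "n \<le> m"
      then show "norm (p (sn n) - p (sn m)) \<le> 2 / real (Suc n)"
        using cross[of n m] mono[of n m] by simp
    qed
  qed
  show ?thesis
  proof (intro bexI[OF _ z0D] allI impI)
    fix e :: real assume e: "e > 0"
    obtain n where n: "3 / e < real n" using reals_Archimedean2 by blast
    have n3: "3 / real (Suc n) < e"
    proof -
      have "3 / e < real (Suc n)" using n by simp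
      then show ?thesis using e by (simp add: field_simps)
    qed
    show "\<exists>s0. \<forall>s. sg_le s0 s \<longrightarrow> norm (metric_proj D (T s x) - z0) < e"
    proof (intro exI allI impI)
      fix s assume "sg_le (sn n) s"
      then have "s \<in> closure (range (\<lambda>t. t * sn n)) \<union> {sn n}"
        unfolding sg_le_def by blast
      from near[OF this] have a: "norm (p s - p (sn n)) < 1 / real (Suc n)" .
      have "p s - z0 = (p s - p (sn n)) + (p (sn n) - z0)" by simp
      then have "norm (p s - z0) \<le> norm (p s - p (sn n)) + norm (p (sn n) - z0)"
        by (metis norm_triangle_ineq)
      with a bound[of n] have "norm (p s - z0) < 3 / real (Suc n)" by simp
      with n3 show "norm (metric_proj D (T s x) - z0) < e" by (simp add: p_def y_def)
    qed
  qed
qed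

end
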